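(* For all integers $m,n\geq 1$, \[p^{ed}_{od}(2m,2n)=p^{ed}_{od}(2m,2n-1).\]
   Context: $\mathcal{P}^{ed}_{od}$ is the set of integer partitions such that: - all parts are distinct; - every odd part is smaller than every even part; - at least one odd part appears. $p^{ed}_{od}(m,n)$ is the number of partitions of $n$ in $\mathcal{P}^{ed}_{od}$ with exactly $m$ parts. *)

theory Defs
  imports Main
begin

text \<open>A partition into distinct parts is represented by its (finite) set of parts,
  all of which are positive integers.\<close>

definition P_ed_od :: "nat set set" where
  "P_ed_od = {S. finite S \<and> 0 \<notin> S
      \<and> (\<forall>a\<in>S. \<forall>b\<in>S. odd a \<longrightarrow> even b \<longrightarrow> a < b)
      \<and> (\<exists>a\<in>S. odd a)}"

definition p_ed_od :: "nat \<Rightarrow> nat \<Rightarrow> nat" where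
  "p_ed_od m n = card {S \<in> P_ed_od. \<Sum>S = n \<and> card S = m}"

end

theory Submission
  imports Defs
begin

lemma a1: "odd (x::nat) \<Longrightarrow> a mod 2 = c mod 2 \<Longrightarrow> (x + a) mod 2 = Suc c mod 2" by presburger
lemma a2: "even (x::nat) \<Longrightarrow> a mod 2 = c mod 2 \<Longrightarrow> (x + a) mod 2 = c mod 2" by presburger
lemma a3: "odd (q::nat) \<Longrightarrow> odd z \<Longrightarrow> z < q \<Longrightarrow> 3 \<le> q" by presburger
lemma a4: "odd (q::nat) \<Longrightarrow> even (q-1)" by presburger
lemma a5: assumes "odd (a::nat)" "odd q" "a \<le> q" "a \<noteq> q" shows "a \<le> q - 2"
proof -
  have "Suc a \<noteq> q" using assms(1,2) by auto
  then show ?thesis using assms(3,4) by linarith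
qed
lemma a6: "even (e::nat) \<Longrightarrow> even b \<Longrightarrow> e \<le> b \<Longrightarrow> b \<noteq> e \<Longrightarrow> e+2 \<le> b" by presburger
lemma a7: "(s::nat) mod 2 = c mod 2 \<Longrightarrow> s = 2*n \<Longrightarrow> even c" by presburger
lemma a8: "(c::nat) \<noteq> 0 \<Longrightarrow> even c \<Longrightarrow> 2 \<le> c" by presburger
lemma a9: assumes "(s::nat) mod 2 = c mod 2" "s = 2*n - 1" "1 \<le> n" shows "odd c"
proof -
  have "s = Suc (2*(n-1))" using assms(2,3) by linarith
  then have "s mod 2 = 1" by simp
  then show ?thesis using assms(1) by (simp add: odd_iff_mod_2_eq_one)
qed

lemma setE: "odd (q::nat) \<Longrightarrow> even (q - 1) \<Longrightarrow> {y\<in>insert (q-1) (S - {q}). even y} = insert (q-1) {y\<in>S. even y}"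
  by blast
lemma setO: "even (e::nat) \<Longrightarrow> {y\<in>insert (e+1) (T - {e}). odd y} = insert (e+1) {y\<in>T. odd y}"
  by auto

lemma mnE: "y \<in> insert (q - 1) {y \<in> S. even y} \<Longrightarrow> (\<And>b. b\<in>S \<Longrightarrow> even b \<Longrightarrow> (q::nat) < b) \<Longrightarrow> q - 1 \<le> y"
  by force
lemma mxO: "y \<in> insert (e + 1) {y \<in> T. odd y} \<Longrightarrow> (\<And>a. a\<in>T \<Longrightarrow> odd a \<Longrightarrow> (a::nat) < e) \<Longrightarrow> y \<le> e + 1"
  by force

lemma par: "finite S \<Longrightarrow> (\<Sum>S) mod 2 = card {x\<in>S. odd x} mod 2"
proof (induction S rule: finite_induct)
  case empty then show ?case by simp
next
  case (insert x F)
  have e: "{y\<in>insert x F. odd y} = (if odd x then insert x {y\<in>F. odd y} else {y\<in>F. odd y})"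
    by auto
  have "finite {y\<in>F. odd y}" using insert by auto
  moreover have "x \<notin> {y\<in>F. odd y}" using insert by auto
  ultimately have c: "card {y\<in>insert x F. odd y} = (if odd x then Suc (card {y\<in>F. odd y}) else card {y\<in>F. odd y})"
    using e by (simp only: if_split) (simp add: card_insert_if)
  have s: "\<Sum>(insert x F) = x + \<Sum>F" using insert by simp
  show ?case unfolding c s using insert.IH by (cases "odd x") (simp_all add: a1 a2)
qed

definition fo :: "nat set \<Rightarrow> nat set" where
  "fo S = (let q = Max {x\<in>S. odd x} in insert (q-1) (S - {q}))"
definition ge :: "nat set \<Rightarrow> nat set" where
  "ge T = (let e = Min {x\<in>T. even x} in insert (e+1) (T - {e}))"

lemma fo_props:
  assumes S: "S \<in> P_ed_od" and x: "x \<in> S" "odd x" and two: "2 \<le> card {y\<in>S. odd y}"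
  shows "fo S \<in> P_ed_od" "\<Sum>(fo S) = \<Sum>S - 1" "card (fo S) = card S" "ge (fo S) = S"
proof -
  define Od where "Od = {y\<in>S. odd y}"
  have fin: "finite S" "0 \<notin> S" and ord: "\<And>a b. a\<in>S \<Longrightarrow> b\<in>S \<Longrightarrow> odd a \<Longrightarrow> even b \<Longrightarrow> a < b"
    using S by (auto simp: P_ed_od_def)
  have fO: "finite Od" using fin by (simp add: Od_def)
  have ne: "Od \<noteq> {}" using x by (auto simp: Od_def)
  define q where "q = Max Od"
  have qO: "q \<in> Od" using fO ne q_def by simp
  hence qS: "q \<in> S" "odd q" by (auto simp: Od_def)
  have le: "\<And>y. y \<in> S \<Longrightarrow> odd y \<Longrightarrow> y \<le> q" using fO q_def by (auto simp: Od_def)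
  have "card Od \<ge> 2" using two Od_def by simp
  then obtain z where z: "z \<in> Od" "z \<noteq> q"
    by (metis One_nat_def card_le_Suc0_iff_eq fO not_less_eq_eq numeral_2_eq_2 qO)
  hence zS: "z \<in> S" "odd z" "z < q" using le by (auto simp: Od_def order.order_iff_strict)
  have z0: "z \<ge> 1" using zS fin by (cases z) auto
  have q3: "q \<ge> 3" using zS qS a3 by blast
  have nin: "q - 1 \<notin> S"
  proof
    assume "q - 1 \<in> S"
    moreover have "even (q - 1)" using qS(2) a4 by blast
    ultimately have "q < q - 1" using ord[OF qS(1)] qS(2) by blast
    thus False by simp
  qed
  have fS: "fo S = insert (q-1) (S - {q})" by (simp add: fo_def q_def Od_def Let_def)
  show "fo S \<in> P_ed_od"
    unfolding fS P_ed_od_def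
  proof (intro CollectI conjI ballI impI)
    show "finite (insert (q - 1) (S - {q}))" using fin by simp
    show "0 \<notin> insert (q - 1) (S - {q})" using fin q3 by auto
    show "\<exists>a\<in>insert (q - 1) (S - {q}). odd a" using zS by auto
    fix a b assume a: "a \<in> insert (q - 1) (S - {q})" and b: "b \<in> insert (q - 1) (S - {q})"
      and oa: "odd a" and eb: "even b"
    have "a \<noteq> q - 1" using oa qS a4 by metis
    hence aS: "a \<in> S" "a \<noteq> q" using a by auto
    have "a \<le> q" using le aS oa by auto
    hence "a \<le> q - 2" using aS oa qS a5 by blast
    then show "a < b" using b ord[OF aS(1) _ oa eb] q3 by auto
  qed
  show "\<Sum>(fo S) = \<Sum>S - 1"
  proof -
    have "\<Sum>(fo S) = (q-1) + \<Sum>(S - {q})" using fS fin nin by simp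
    moreover have "\<Sum>S = q + \<Sum>(S - {q})" using fin qS by (simp add: sum.remove)
    ultimately show ?thesis using q3 by simp
  qed
  have "card (fo S) = Suc (card (S - {q}))" unfolding fS using fin nin by (simp add: card_insert_disjoint)
  also have "\<dots> = card S" using card_Suc_Diff1[OF fin(1) qS(1)] .
  finally show "card (fo S) = card S" .
  have E: "{y\<in>fo S. even y} = insert (q-1) {y\<in>S. even y}" unfolding fS using setE[OF qS(2) a4[OF qS(2)]] .
  have "Min {y\<in>fo S. even y} = q - 1"
    unfolding E
  proof (rule Min_eqI)
    show "finite (insert (q - 1) {y \<in> S. even y})" using fin by simp
    show "q - 1 \<in> insert (q - 1) {y \<in> S. even y}" by simp
    fix y assume "y \<in> insert (q - 1) {y \<in> S. even y}"
    then show "q - 1 \<le> y" using ord[OF qS(1) _ qS(2)] by (rule mnE)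
  qed
  then have "ge (fo S) = insert (q - 1 + 1) (fo S - {q - 1})" by (simp add: ge_def Let_def)
  also have "\<dots> = insert q (insert (q-1) (S - {q}) - {q - 1})" using q3 fS by simp
  also have "\<dots> = S" using qS nin by blast
  finally show "ge (fo S) = S" .
qed

lemma ge_props:
  assumes T: "T \<in> P_ed_od" and x: "x \<in> T" "even x"
  shows "ge T \<in> P_ed_od" "\<Sum>(ge T) = \<Sum>T + 1" "card (ge T) = card T" "fo (ge T) = T"
proof -
  define E where "E = {y\<in>T. even y}"
  have fin: "finite T" "0 \<notin> T" and ord: "\<And>a b. a\<in>T \<Longrightarrow> b\<in>T \<Longrightarrow> odd a \<Longrightarrow> even b \<Longrightarrow> a < b"
    using T by (auto simp: P_ed_od_def)
  have fE: "finite E" using fin by (simp add: E_def)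
  have ne: "E \<noteq> {}" using x by (auto simp: E_def)
  define e where "e = Min E"
  have eE: "e \<in> E" using fE ne e_def by simp
  hence eT: "e \<in> T" "even e" by (auto simp: E_def)
  have le: "\<And>y. y \<in> T \<Longrightarrow> even y \<Longrightarrow> e \<le> y" using fE e_def by (auto simp: E_def)
  have nin: "e + 1 \<notin> T"
  proof
    assume "e + 1 \<in> T"
    hence "e + 1 < e" using ord[OF _ eT(1)] eT(2) by simp
    thus False by simp
  qed
  have gT: "ge T = insert (e+1) (T - {e})" by (simp add: ge_def e_def E_def Let_def)
  show "ge T \<in> P_ed_od"
    unfolding gT P_ed_od_def
  proof (intro CollectI conjI ballI impI)
    show "finite (insert (e+1) (T - {e}))" using fin by simp
    show "0 \<notin> insert (e+1) (T - {e})" using fin by auto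
    show "\<exists>a\<in>insert (e+1) (T - {e}). odd a" using eT by auto
    fix a b assume a: "a \<in> insert (e+1) (T - {e})" and b: "b \<in> insert (e+1) (T - {e})"
      and oa: "odd a" and eb: "even b"
    have bT: "b \<in> T" "b \<noteq> e" using b eb eT by auto
    have "e \<le> b" using le bT eb by auto
    hence "e + 2 \<le> b" using bT eb eT a6 by blast
    then show "a < b" using a ord[OF _ bT(1) oa eb] by auto
  qed
  show "\<Sum>(ge T) = \<Sum>T + 1"
  proof -
    have "\<Sum>(ge T) = (e+1) + \<Sum>(T - {e})" using gT fin nin by simp
    moreover have "\<Sum>T = e + \<Sum>(T - {e})" using fin eT by (simp add: sum.remove)
    ultimately show ?thesis by simp
  qed
  have "card (ge T) = Suc (card (T - {e}))" unfolding gT using fin nin by (simp add: card_insert_disjoint)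
  also have "\<dots> = card T" using card_Suc_Diff1[OF fin(1) eT(1)] .
  finally show "card (ge T) = card T" .
  have Od: "{y\<in>ge T. odd y} = insert (e+1) {y\<in>T. odd y}" unfolding gT using setO[OF eT(2)] .
  have "Max {y\<in>ge T. odd y} = e + 1"
    unfolding Od
  proof (rule Max_eqI)
    show "finite (insert (e+1) {y \<in> T. odd y})" using fin by simp
    show "e+1 \<in> insert (e+1) {y \<in> T. odd y}" by simp
    fix y assume "y \<in> insert (e+1) {y \<in> T. odd y}"
    then show "y \<le> e + 1" using ord[OF _ eT(1) _ eT(2)] by (rule mxO)
  qed
  then have "fo (ge T) = insert (e + 1 - 1) (ge T - {e + 1})" by (simp add: fo_def Let_def)
  also have "\<dots> = insert e (insert (e+1) (T - {e}) - {e + 1})" using gT by simp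
  also have "\<dots> = T" using eT nin by blast
  finally show "fo (ge T) = T" .
qed

theorem mainTheorem7:
  fixes m n :: nat
  assumes "m \<ge> 1" and "n \<ge> 1"
  shows "p_ed_od (2*m) (2*n) = p_ed_od (2*m) (2*n - 1)"
proof -
  define A where "A = {S \<in> P_ed_od. \<Sum>S = 2*n \<and> card S = 2*m}"
  define B where "B = {S \<in> P_ed_od. \<Sum>S = 2*n-1 \<and> card S = 2*m}"
  have Aodd: "2 \<le> card {y\<in>S. odd y}" "\<exists>x\<in>S. odd x" if "S \<in> A" for S
  proof -
    have S: "S \<in> P_ed_od" "\<Sum>S = 2*n" using that by (auto simp: A_def)
    have fin: "finite S" using S by (simp add: P_ed_od_def)
    obtain x where x: "x \<in> S" "odd x" using S by (auto simp: P_ed_od_def)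
    have "card {y\<in>S. odd y} \<noteq> 0" using x fin by auto
    moreover have "even (card {y\<in>S. odd y})" using par[OF fin] S a7 by blast
    ultimately show "2 \<le> card {y\<in>S. odd y}" by (rule a8)
    show "\<exists>x\<in>S. odd x" using x by blast
  qed
  have Beven: "\<exists>x\<in>T. even x" if "T \<in> B" for T
  proof (rule ccontr)
    assume nE: "\<not> (\<exists>x\<in>T. even x)"
    have T: "T \<in> P_ed_od" "\<Sum>T = 2*n-1" "card T = 2*m" using that by (auto simp: B_def)
    have fin: "finite T" using T by (simp add: P_ed_od_def)
    have "{y\<in>T. odd y} = T" using nE by auto
    hence "odd (card {y\<in>T. odd y})" using a9[OF par[OF fin] T(2) assms(2)] by simp
    then show False using T \<open>{y\<in>T. odd y} = T\<close> by simp
  qed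
  have "bij_betw fo A B"
  proof (rule bij_betw_byWitness[where f'=ge])
    show "\<forall>a\<in>A. ge (fo a) = a"
    proof
      fix S assume S: "S \<in> A"
      obtain x where "x \<in> S" "odd x" using Aodd(2)[OF S] by blast
      then show "ge (fo S) = S" using fo_props(4)[OF _ _ _ Aodd(1)[OF S]] S by (simp add: A_def)
    qed
    show "\<forall>a\<in>B. fo (ge a) = a"
    proof
      fix T assume T: "T \<in> B"
      obtain x where "x \<in> T" "even x" using Beven[OF T] by blast
      then show "fo (ge T) = T" using ge_props(4)[of T x] T by (simp add: B_def)
    qed
    show "fo ` A \<subseteq> B"
    proof
      fix y assume "y \<in> fo ` A"
      then obtain S where S: "S \<in> A" "y = fo S" by auto
      obtain x where "x \<in> S" "odd x" using Aodd(2)[OF S(1)] by blast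
      then show "y \<in> B" using fo_props[OF _ _ _ Aodd(1)[OF S(1)]] S by (auto simp: A_def B_def)
    qed
    show "ge ` B \<subseteq> A"
    proof
      fix y assume "y \<in> ge ` B"
      then obtain T where T: "T \<in> B" "y = ge T" by auto
      obtain x where "x \<in> T" "even x" using Beven[OF T(1)] by blast
      then show "y \<in> A" using ge_props[of T x] T assms by (auto simp: A_def B_def)
    qed
  qed
  then have "card A = card B" by (rule bij_betw_same_card)
  then show ?thesis by (simp add: p_ed_od_def A_def B_def)
qed

end
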